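(* Let $L$ be a distributive lattice (not necessarily bounded), let $n\ge 1$, and for each $i\in[n]=\{1,\dots,n\}$ let $a_i,b_i\in L$ with $a_i<b_i$. For $I\subseteq[n]$ let $\widehat{\mathbf e}_I\in L^n$ be the tuple whose $i$-th component is $b_i$ if $i\in I$ and $a_i$ if $i\notin I$, and let $D=\{\widehat{\mathbf e}_I : I\subseteq[n]\}$. Let $f\colon D\to L$. Then there exists a lattice polynomial function $p\colon L^n\to L$ with $p|_D=f$ if and only if $f$ is monotone and satisfies $$f(\widehat{\mathbf e}_{I\cup\{k\}})\wedge a_k\le f(\widehat{\mathbf e}_I)\le f(\widehat{\mathbf e}_{I\setminus\{k\}})\vee b_k\quad\text{for all } I\subseteq[n],\ k\in[n].\qquad(\star)$$ In this case, a polynomial function $p$ over $L$ satisfies $p|_D=f$ if and only if $c_I^-\le c_I\le c_I^+$ for all $I\subseteq[n]$, where $c_I$ are the coefficients of the (monotone) DNF of $p$ and $c_I^-,c_I^+$ are as defined in the context. In particular, one such $p$ is the polynomial function $p_0$ given by $$p_0(\mathbf x)=\bigvee_{I\subseteq[n]}\Bigl(f(\widehat{\mathbf e}_I)\wedge\bigwedge_{i\in I}x_i\Bigr).$$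
   Context: A lattice polynomial function on $L$ is a function $L^n\to L$ obtainable as a composition of $\wedge$, $\vee$, projections and constants from $L$. Let $0$ and $1$ denote the least and greatest elements of $L$ if they exist, and otherwise external elements adjoined below and above $L$. Every polynomial function $p$ over $L$ has a unique representation in disjunctive normal form (DNF) $p(\mathbf x)=\bigvee_{I\subseteq[n]}(c_I\wedge\bigwedge_{i\in I}x_i)$ with coefficients $c_I\in L\cup\{0,1\}$ that are monotone ($I\subseteq J\Rightarrow c_I\le c_J$), $c_\emptyset\neq 1$, $c_{[n]}\neq 0$; these are "the coefficients of the DNF of $p$". Embed $L$ into the Boolean algebra $B$ generated by $L$ (Birkhoff–Priestley), with bounds $0,1$ (coinciding with those of $L$ if $L$ is bounded) and complement $x\mapsto x'$. For $I\subseteq[n]$ define in $B$: $c_I^-=f(\widehat{\mathbf e}_I)\wedge\bigwedge_{i\notin I}a_i'$ and $c_I^+=f(\widehat{\mathbf e}_I)\vee\bigvee_{i\in I}b_i'$. $f$ monotone means $I\subseteq J\Rightarrow f(\widehat{\mathbf e}_I)\le f(\widehat{\mathbf e}_J)$. *)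

theory Defs
  imports Main
begin

unbundle lattice_syntax

text \<open>Indices: [n] = {1..n}; tuples in L^n are functions nat => 'a (only indices in {1..n} matter).\<close>

inductive lat_poly :: "nat \<Rightarrow> ((nat \<Rightarrow> 'a::distrib_lattice) \<Rightarrow> 'a) \<Rightarrow> bool" for n :: nat where
  proj:  "i \<in> {1..n} \<Longrightarrow> lat_poly n (\<lambda>x. x i)"
| const: "lat_poly n (\<lambda>x. c)"
| meet:  "lat_poly n p \<Longrightarrow> lat_poly n q \<Longrightarrow> lat_poly n (\<lambda>x. p x \<sqinter> q x)"
| join:  "lat_poly n p \<Longrightarrow> lat_poly n q \<Longrightarrow> lat_poly n (\<lambda>x. p x \<squnion> q x)"

definition ehat :: "(nat \<Rightarrow> 'a) \<Rightarrow> (nat \<Rightarrow> 'a) \<Rightarrow> nat set \<Rightarrow> nat \<Rightarrow> 'a" where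
  "ehat a b I = (\<lambda>i. if i \<in> I then b i else a i)"

definition monotone_on_D :: "nat \<Rightarrow> (nat \<Rightarrow> 'a::order) \<Rightarrow> (nat \<Rightarrow> 'a) \<Rightarrow> ((nat \<Rightarrow> 'a) \<Rightarrow> 'a) \<Rightarrow> bool" where
  "monotone_on_D n a b f \<longleftrightarrow>
     (\<forall>I J. I \<subseteq> J \<and> J \<subseteq> {1..n} \<longrightarrow> f (ehat a b I) \<le> f (ehat a b J))"

definition star_cond :: "nat \<Rightarrow> (nat \<Rightarrow> 'a::lattice) \<Rightarrow> (nat \<Rightarrow> 'a) \<Rightarrow> ((nat \<Rightarrow> 'a) \<Rightarrow> 'a) \<Rightarrow> bool" where
  "star_cond n a b f \<longleftrightarrow>
     (\<forall>I k. I \<subseteq> {1..n} \<and> k \<in> {1..n} \<longrightarrow>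
        f (ehat a b (I \<union> {k})) \<sqinter> a k \<le> f (ehat a b I) \<and>
        f (ehat a b I) \<le> f (ehat a b (I - {k})) \<squnion> b k)"

definition bmeet :: "'i set \<Rightarrow> ('i \<Rightarrow> 'b::boolean_algebra) \<Rightarrow> 'b" where
  "bmeet S g = Inf_fin (insert top (g ` S))"

definition bjoin :: "'i set \<Rightarrow> ('i \<Rightarrow> 'b::boolean_algebra) \<Rightarrow> 'b" where
  "bjoin S g = Sup_fin (insert bot (g ` S))"

inductive_set bgen :: "('a \<Rightarrow> 'b::boolean_algebra) \<Rightarrow> 'b set" for h where
  img: "h x \<in> bgen h"
| bot: "bot \<in> bgen h"
| top: "top \<in> bgen h"
| inf: "u \<in> bgen h \<Longrightarrow> v \<in> bgen h \<Longrightarrow> u \<sqinter> v \<in> bgen h"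
| sup: "u \<in> bgen h \<Longrightarrow> v \<in> bgen h \<Longrightarrow> u \<squnion> v \<in> bgen h"
| compl: "u \<in> bgen h \<Longrightarrow> - u \<in> bgen h"

definition bool_envelope :: "('a::distrib_lattice \<Rightarrow> 'b::boolean_algebra) \<Rightarrow> bool" where
  "bool_envelope h \<longleftrightarrow> inj h \<and>
     (\<forall>x y. h (x \<sqinter> y) = h x \<sqinter> h y) \<and> (\<forall>x y. h (x \<squnion> y) = h x \<squnion> h y) \<and>
     bgen h = UNIV \<and>
     (\<forall>x. (\<forall>y. x \<le> y) \<longrightarrow> h x = bot) \<and>
     (\<forall>x. (\<forall>y. y \<le> x) \<longrightarrow> h x = top)"

text \<open>c is the coefficient family of the (monotone) DNF of p, with L \<union> {0,1}
  identified with h(L) \<union> {bot, top} inside B.\<close>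
definition dnf_coeffs :: "nat \<Rightarrow> ('a::distrib_lattice \<Rightarrow> 'b::boolean_algebra) \<Rightarrow>
    ((nat \<Rightarrow> 'a) \<Rightarrow> 'a) \<Rightarrow> (nat set \<Rightarrow> 'b) \<Rightarrow> bool" where
  "dnf_coeffs n h p c \<longleftrightarrow>
     (\<forall>I. I \<subseteq> {1..n} \<longrightarrow> c I \<in> range h \<union> {bot, top}) \<and>
     (\<forall>I J. I \<subseteq> J \<and> J \<subseteq> {1..n} \<longrightarrow> c I \<le> c J) \<and>
     c {} \<noteq> top \<and> c {1..n} \<noteq> bot \<and>
     (\<forall>x. h (p x) = bjoin (Pow {1..n}) (\<lambda>I. c I \<sqinter> bmeet I (\<lambda>i. h (x i))))"

definition c_minus :: "nat \<Rightarrow> ('a \<Rightarrow> 'b::boolean_algebra) \<Rightarrow> (nat \<Rightarrow> 'a) \<Rightarrow> (nat \<Rightarrow> 'a) \<Rightarrow>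
    ((nat \<Rightarrow> 'a) \<Rightarrow> 'a) \<Rightarrow> nat set \<Rightarrow> 'b" where
  "c_minus n h a b f I = h (f (ehat a b I)) \<sqinter> bmeet ({1..n} - I) (\<lambda>i. - h (a i))"

definition c_plus :: "('a \<Rightarrow> 'b::boolean_algebra) \<Rightarrow> (nat \<Rightarrow> 'a) \<Rightarrow> (nat \<Rightarrow> 'a) \<Rightarrow>
    ((nat \<Rightarrow> 'a) \<Rightarrow> 'a) \<Rightarrow> nat set \<Rightarrow> 'b" where
  "c_plus h a b f I = h (f (ehat a b I)) \<squnion> bjoin I (\<lambda>i. - h (b i))"

definition p0 :: "nat \<Rightarrow> (nat \<Rightarrow> 'a::distrib_lattice) \<Rightarrow> (nat \<Rightarrow> 'a) \<Rightarrow> ((nat \<Rightarrow> 'a) \<Rightarrow> 'a) \<Rightarrow>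
    (nat \<Rightarrow> 'a) \<Rightarrow> 'a" where
  "p0 n a b f x = Sup_fin ((\<lambda>I. if I = {} then f (ehat a b I)
                                  else f (ehat a b I) \<sqinter> Inf_fin (x ` I)) ` Pow {1..n})"

end

theory Submission
  imports Defs
begin

definition pfilter :: "'a::distrib_lattice set \<Rightarrow> bool" where
 "pfilter U \<longleftrightarrow> (\<forall>x y. x \<in> U \<and> x \<le> y \<longrightarrow> y \<in> U) \<and> (\<forall>x y. x \<in> U \<and> y \<in> U \<longrightarrow> x \<sqinter> y \<in> U)
   \<and> (\<forall>x y. x \<squnion> y \<in> U \<longrightarrow> x \<in> U \<or> y \<in> U)"

lemma prime_filter_exists:
  fixes x y :: "'a::distrib_lattice"
  assumes "\<not> x \<le> y"
  shows "\<exists>U. pfilter U \<and> x \<in> U \<and> y \<notin> U"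
proof -
  define A where "A = {F. (\<forall>u v. u\<in>F \<and> u \<le> v \<longrightarrow> v\<in>F) \<and> (\<forall>u v. u\<in>F \<and> v\<in>F \<longrightarrow> u\<sqinter>v\<in>F) \<and> x\<in>F \<and> y\<notin>F}"
  have up: "{v. x \<le> v} \<in> A" using assms by (auto simp: A_def intro: order_trans)
  have "\<forall>C\<in>chains A. \<exists>U\<in>A. \<forall>X\<in>C. X \<subseteq> U"
  proof
    fix C assume C: "C \<in> chains A"
    show "\<exists>U\<in>A. \<forall>X\<in>C. X \<subseteq> U"
    proof (cases "C = {}")
      case True then show ?thesis using up by auto
    next
      case False
      have CA: "C \<subseteq> A" using C by (rule chainsD2)
      have "\<Union>C \<in> A"
        unfolding A_def
      proof (intro CollectI conjI allI impI)
        fix u v assume "u \<in> \<Union>C \<and> u \<le> v" then obtain X where "X \<in> C" "u \<in> X" "u \<le> v" by blast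
          moreover then have "X \<in> A" using CA by blast
          ultimately have "v \<in> X" unfolding A_def by blast
          then show "v \<in> \<Union>C" using \<open>X \<in> C\<close> by blast
      next
        fix u v assume uv: "u \<in> \<Union>C \<and> v \<in> \<Union>C"
        then obtain X1 X2 where X: "X1 \<in> C" "X2 \<in> C" "u \<in> X1" "v \<in> X2" by auto
        from chainsD[OF C X(1,2)] show "u \<sqinter> v \<in> \<Union>C"
        proof
          assume "X1 \<subseteq> X2" moreover have "X2 \<in> A" using X CA by blast
          ultimately have "u \<sqinter> v \<in> X2" using X unfolding A_def by blast
          then show ?thesis using X by blast
        next
          assume "X2 \<subseteq> X1" moreover have "X1 \<in> A" using X CA by blast
          ultimately have "u \<sqinter> v \<in> X1" using X unfolding A_def by blast
          then show ?thesis using X by blast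
        qed
      next
        show "x \<in> \<Union>C" using False CA by (auto simp: A_def)
      next
        show "y \<notin> \<Union>C" using CA by (auto simp: A_def)
      qed
      then show ?thesis by auto
    qed
  qed
  then obtain M where M: "M\<in>A" "\<forall>X\<in>A. M \<subseteq> X \<longrightarrow> X = M" using Zorn_Lemma2 by blast
  have Mup: "\<And>u v. u\<in>M \<Longrightarrow> u \<le> v \<Longrightarrow> v\<in>M" and Minf: "\<And>u v. u\<in>M \<Longrightarrow> v\<in>M \<Longrightarrow> u\<sqinter>v\<in>M"
    and xM: "x \<in> M" and yM: "y \<notin> M" using M(1) by (auto simp: A_def)
  have ext: "\<exists>w\<in>M. w \<sqinter> u \<le> y" if "u \<notin> M" for u
  proof (rule ccontr)
    assume nex: "\<not> (\<exists>w\<in>M. w \<sqinter> u \<le> y)"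
    define G where "G = {z. \<exists>w\<in>M. w \<sqinter> u \<le> z}"
    have g1: "\<forall>z1 z2. z1 \<in> G \<and> z1 \<le> z2 \<longrightarrow> z2 \<in> G" 
    proof (intro allI impI)
      fix z1 z2 assume "z1 \<in> G \<and> z1 \<le> z2"
      then obtain w where "w \<in> M" "w \<sqinter> u \<le> z1" "z1 \<le> z2" unfolding G_def by blast
      then show "z2 \<in> G" unfolding G_def using order_trans by blast
    qed
    have g2: "\<forall>z1 z2. z1 \<in> G \<and> z2 \<in> G \<longrightarrow> z1 \<sqinter> z2 \<in> G"
    proof (intro allI impI)
      fix z1 z2 assume "z1 \<in> G \<and> z2 \<in> G"
      then obtain w1 w2 where w: "w1\<in>M" "w2\<in>M" "w1 \<sqinter> u \<le> z1" "w2 \<sqinter> u \<le> z2" unfolding G_def by blast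
      have c1: "(w1 \<sqinter> w2) \<sqinter> u \<le> w1 \<sqinter> u" by (intro inf_mono) simp_all
      have c2: "(w1 \<sqinter> w2) \<sqinter> u \<le> w2 \<sqinter> u" by (intro inf_mono) simp_all
      have "(w1 \<sqinter> w2) \<sqinter> u \<le> z1 \<sqinter> z2" using order_trans[OF c1 w(3)] order_trans[OF c2 w(4)] by (rule le_infI)
      then show "z1 \<sqinter> z2 \<in> G" using Minf[OF w(1,2)] unfolding G_def by blast
    qed
    have g3: "x \<in> G" unfolding G_def using xM by (intro CollectI bexI[of _ x]) auto
    have g4: "y \<notin> G" unfolding G_def using nex by blast
    have "G \<in> A" unfolding A_def using g1 g2 g3 g4 by blast
    moreover have "M \<subseteq> G" unfolding G_def by (auto intro: inf_le1)
    ultimately have "G = M" using M(2) by blast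
    moreover have "u \<in> G" unfolding G_def using xM by (intro CollectI bexI[of _ x]) auto
    ultimately show False using that by simp
  qed
  have prime: "\<forall>u v. u \<squnion> v \<in> M \<longrightarrow> u\<in>M \<or> v\<in>M"
  proof (intro allI impI, rule ccontr)
    fix u v assume uv: "u \<squnion> v \<in> M" "\<not>(u\<in>M \<or> v\<in>M)"
    obtain w1 where w1: "w1\<in>M" "w1\<sqinter>u \<le> y" using ext uv by blast
    obtain w2 where w2: "w2\<in>M" "w2\<sqinter>v \<le> y" using ext uv by blast
    have wM: "w1 \<sqinter> w2 \<sqinter> (u \<squnion> v) \<in> M" using Minf w1 w2 uv by blast
    have "w1 \<sqinter> w2 \<sqinter> (u \<squnion> v) = (w1 \<sqinter> w2 \<sqinter> u) \<squnion> (w1 \<sqinter> w2 \<sqinter> v)" by (rule inf_sup_distrib1)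
    also have "\<dots> \<le> y"
    proof (rule le_supI)
      have "w1 \<sqinter> w2 \<sqinter> u \<le> w1 \<sqinter> u" by (intro inf_mono) simp_all
      then show "w1 \<sqinter> w2 \<sqinter> u \<le> y" using w1(2) by (rule order_trans)
      have "w1 \<sqinter> w2 \<sqinter> v \<le> w2 \<sqinter> v" by (intro inf_mono) simp_all
      then show "w1 \<sqinter> w2 \<sqinter> v \<le> y" using w2(2) by (rule order_trans)
    qed
    finally show False using Mup[OF wM] yM by blast
  qed
  have "pfilter M" unfolding pfilter_def using Mup Minf prime by blast
  then show ?thesis using xM yM by blast
qed

lemma le_via_pf: "(x::'a::distrib_lattice) \<le> y \<longleftrightarrow> (\<forall>U. pfilter U \<longrightarrow> x \<in> U \<longrightarrow> y \<in> U)"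
proof
  assume "x \<le> y" then show "\<forall>U. pfilter U \<longrightarrow> x \<in> U \<longrightarrow> y \<in> U" unfolding pfilter_def by blast
next
  assume "\<forall>U. pfilter U \<longrightarrow> x \<in> U \<longrightarrow> y \<in> U" then show "x \<le> y" using prime_filter_exists[of x y] by blast
qed

lemma eq_via_pf: "(x::'a::distrib_lattice) = y \<longleftrightarrow> (\<forall>U. pfilter U \<longrightarrow> (x \<in> U \<longleftrightarrow> y \<in> U))"
  by (meson antisym le_via_pf)

lemma pf_inf: "pfilter U \<Longrightarrow> (x \<sqinter> y \<in> U) \<longleftrightarrow> (x\<in>U \<and> y\<in>U)"
  unfolding pfilter_def by (meson inf_le1 inf_le2)
lemma pf_sup: "pfilter U \<Longrightarrow> (x \<squnion> y \<in> U) \<longleftrightarrow> (x\<in>U \<or> y\<in>U)"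
  unfolding pfilter_def by (meson sup_ge1 sup_ge2)
lemma pf_mono: "pfilter U \<Longrightarrow> x\<in>U \<Longrightarrow> x \<le> y \<Longrightarrow> y\<in>U"
  unfolding pfilter_def by blast

lemma pf_Sup_fin: assumes U: "pfilter U" shows "finite S \<Longrightarrow> S \<noteq> {} \<Longrightarrow> (Sup_fin S \<in> U) \<longleftrightarrow> (\<exists>s\<in>S. s\<in>U)"
proof (induction S rule: finite_ne_induct)
  case (singleton x) then show ?case by simp
next
  case (insert x F) then show ?case by (simp add: pf_sup[OF U])
qed

lemma pf_Inf_fin: assumes U: "pfilter U" shows "finite S \<Longrightarrow> S \<noteq> {} \<Longrightarrow> (Inf_fin S \<in> U) \<longleftrightarrow> (\<forall>s\<in>S. s\<in>U)"
proof (induction S rule: finite_ne_induct)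
  case (singleton x) then show ?case by simp
next
  case (insert x F) then show ?case by (simp add: pf_inf[OF U])
qed

lemma pf_compl: "pfilter U \<Longrightarrow> top \<in> U \<Longrightarrow> bot \<notin> U \<Longrightarrow> (- (x::'b::boolean_algebra) \<in> U) \<longleftrightarrow> x \<notin> U"
  by (metis boolean_algebra.conj_cancel_right boolean_algebra.disj_cancel_right pf_inf pf_sup)

lemma pf_bjoin: "pfilter U \<Longrightarrow> bot \<notin> U \<Longrightarrow> finite S \<Longrightarrow> (bjoin S g \<in> U) \<longleftrightarrow> (\<exists>s\<in>S. g s \<in> U)"
  unfolding bjoin_def by (subst pf_Sup_fin) auto

lemma pf_bmeet: "pfilter U \<Longrightarrow> top \<in> U \<Longrightarrow> finite S \<Longrightarrow> (bmeet S g \<in> U) \<longleftrightarrow> (\<forall>s\<in>S. g s \<in> U)"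
  unfolding bmeet_def by (subst pf_Inf_fin) auto

locale core =
  fixes N :: "nat set" and A B :: "nat \<Rightarrow> bool" and Fp :: "nat set \<Rightarrow> bool"
  assumes finN: "finite N"
  and AB: "\<And>i. i\<in>N \<Longrightarrow> A i \<Longrightarrow> B i"
  and mono: "\<And>I J. I \<subseteq> J \<Longrightarrow> J \<subseteq> N \<Longrightarrow> Fp I \<Longrightarrow> Fp J"
  and st1: "\<And>I k. I \<subseteq> N \<Longrightarrow> k\<in>N \<Longrightarrow> Fp (I\<union>{k}) \<Longrightarrow> A k \<Longrightarrow> Fp I"
  and st2: "\<And>I k. I \<subseteq> N \<Longrightarrow> k\<in>N \<Longrightarrow> Fp I \<Longrightarrow> \<not> B k \<Longrightarrow> Fp (I-{k})"
begin

definition "M = {i. B i \<and> \<not> A i}"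
definition "Ob = {i\<in>N. A i}"

lemma reduce_aux: "finite S \<Longrightarrow> \<forall>J. J \<subseteq> N \<and> S = J - M \<longrightarrow> Fp J = Fp (J \<inter> M)"
proof (induction S rule: finite_induct)
  case empty then show ?case by (metis Diff_eq_empty_iff inf.absorb1)
next
  case (insert k S)
  show ?case
  proof (intro allI impI)
    fix J assume J: "J \<subseteq> N \<and> insert k S = J - M"
    define J' where "J' = J - {k}"
    have kJ: "k \<in> J" "k \<notin> M" "k \<in> N" using J by auto
    have "J' \<subseteq> N \<and> S = J' - M" using J insert(2) unfolding J'_def by auto
    then have "Fp J' = Fp (J' \<inter> M)" using insert(3) by blast
    moreover have "J' \<inter> M = J \<inter> M" unfolding J'_def using kJ by auto
    moreover have "Fp J = Fp J'"
    proof
      assume FJ: "Fp J"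
      show "Fp J'"
      proof (cases "A k")
        case True
        have "J' \<union> {k} = J" unfolding J'_def using kJ by auto
        then show ?thesis using st1[of J' k] FJ True J kJ unfolding J'_def by auto
      next
        case False then have "\<not> B k" using kJ unfolding M_def by auto
        then show ?thesis using st2[of J k] FJ J kJ unfolding J'_def by auto
      qed
    next
      assume "Fp J'" then show "Fp J" using mono[of J' J] J unfolding J'_def by auto
    qed
    ultimately show "Fp J = Fp (J \<inter> M)" by simp
  qed
qed

lemma reduce: assumes J: "J \<subseteq> N" shows "Fp J = Fp (J \<inter> M)"
proof -
  have "finite (J - M)" using finN J finite_subset by blast
  then show ?thesis using reduce_aux J by blast
qed

lemma eval_core: assumes J: "J \<subseteq> N"
  shows "(\<exists>I\<subseteq>N. Fp I \<and> (\<forall>i\<in>I. if i\<in>J then B i else A i)) \<longleftrightarrow> Fp J"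
proof
  assume "\<exists>I\<subseteq>N. Fp I \<and> (\<forall>i\<in>I. if i\<in>J then B i else A i)"
  then obtain I where I: "I \<subseteq> N" "Fp I" "\<forall>i\<in>I. if i\<in>J then B i else A i" by blast
  have "I \<inter> M \<subseteq> J \<inter> M" using I(3) unfolding M_def by (auto split: if_splits)
  then have "Fp (J \<inter> M)" using I reduce[of I] mono[of "I \<inter> M" "J \<inter> M"] J by auto
  then show "Fp J" using reduce[OF J] by simp
next
  assume FJ: "Fp J"
  define I where "I = Ob \<union> (J \<inter> M)"
  have IN: "I \<subseteq> N" unfolding I_def Ob_def using J by auto
  have "I \<inter> M = J \<inter> M" unfolding I_def Ob_def M_def by auto
  then have "Fp I" using reduce[OF IN] reduce[OF J] FJ by simp
  moreover have "\<forall>i\<in>I. if i\<in>J then B i else A i" unfolding I_def Ob_def M_def using AB by auto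
  ultimately show "\<exists>I\<subseteq>N. Fp I \<and> (\<forall>i\<in>I. if i\<in>J then B i else A i)" using IN by blast
qed

lemma dnf_core:
  assumes Cmono: "\<And>I J. I \<subseteq> J \<Longrightarrow> J \<subseteq> N \<Longrightarrow> Cp I \<Longrightarrow> Cp J"
  shows "(\<forall>J\<subseteq>N. (\<exists>I\<subseteq>N. Cp I \<and> (\<forall>i\<in>I. if i\<in>J then B i else A i)) \<longleftrightarrow> Fp J) \<longleftrightarrow>
         (\<forall>I\<subseteq>N. (Fp I \<and> (\<forall>i\<in>N-I. \<not> A i) \<longrightarrow> Cp I) \<and> (Cp I \<longrightarrow> Fp I \<or> (\<exists>i\<in>I. \<not> B i)))"
proof -
  define K where "K J = Ob \<union> (J \<inter> M)" for J
  have KN: "J \<subseteq> N \<Longrightarrow> K J \<subseteq> N" for J unfolding K_def Ob_def by auto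
  have Gam: "(\<exists>I\<subseteq>N. Cp I \<and> (\<forall>i\<in>I. if i\<in>J then B i else A i)) \<longleftrightarrow> Cp (K J)" if J: "J \<subseteq> N" for J
  proof
    assume "\<exists>I\<subseteq>N. Cp I \<and> (\<forall>i\<in>I. if i\<in>J then B i else A i)"
    then obtain I where I: "I \<subseteq> N" "Cp I" "\<forall>i\<in>I. if i\<in>J then B i else A i" by blast
    have "I \<subseteq> K J" using I unfolding K_def Ob_def M_def by (auto split: if_splits)
    then show "Cp (K J)" using Cmono I KN[OF J] by blast
  next
    assume "Cp (K J)"
    moreover have "\<forall>i\<in>K J. if i\<in>J then B i else A i" unfolding K_def Ob_def M_def using AB by auto
    ultimately show "\<exists>I\<subseteq>N. Cp I \<and> (\<forall>i\<in>I. if i\<in>J then B i else A i)" using KN[OF J] by blast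
  qed
  have FK: "Fp (K J) = Fp J" if J: "J \<subseteq> N" for J
  proof -
    have "K J \<inter> M = J \<inter> M" unfolding K_def Ob_def M_def by auto
    then show ?thesis using reduce[OF KN[OF J]] reduce[OF J] by simp
  qed
  show ?thesis
  proof
    assume L: "\<forall>J\<subseteq>N. (\<exists>I\<subseteq>N. Cp I \<and> (\<forall>i\<in>I. if i\<in>J then B i else A i)) \<longleftrightarrow> Fp J"
    show "\<forall>I\<subseteq>N. (Fp I \<and> (\<forall>i\<in>N-I. \<not> A i) \<longrightarrow> Cp I) \<and> (Cp I \<longrightarrow> Fp I \<or> (\<exists>i\<in>I. \<not> B i))"
    proof (intro allI impI conjI)
      fix I assume I: "I \<subseteq> N"
      have LI: "Cp (K I) \<longleftrightarrow> Fp I" using L I Gam[OF I] by blast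
      { assume a: "Fp I \<and> (\<forall>i\<in>N-I. \<not> A i)"
        then have "K I \<subseteq> I" unfolding K_def Ob_def by auto
        then show "Cp I" using a LI Cmono I by blast }
      { assume c: "Cp I"
        show "Fp I \<or> (\<exists>i\<in>I. \<not> B i)"
        proof (cases "\<forall>i\<in>I. B i")
          case True
          then have "I \<subseteq> K I" using I unfolding K_def Ob_def M_def by auto
          then show ?thesis using c LI Cmono KN[OF I] by blast
        qed auto }
    qed
  next
    assume R: "\<forall>I\<subseteq>N. (Fp I \<and> (\<forall>i\<in>N-I. \<not> A i) \<longrightarrow> Cp I) \<and> (Cp I \<longrightarrow> Fp I \<or> (\<exists>i\<in>I. \<not> B i))"
    show "\<forall>J\<subseteq>N. (\<exists>I\<subseteq>N. Cp I \<and> (\<forall>i\<in>I. if i\<in>J then B i else A i)) \<longleftrightarrow> Fp J"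
    proof (intro allI impI)
      fix J assume J: "J \<subseteq> N"
      have RK: "(Fp (K J) \<and> (\<forall>i\<in>N-K J. \<not> A i) \<longrightarrow> Cp (K J)) \<and> (Cp (K J) \<longrightarrow> Fp (K J) \<or> (\<exists>i\<in>K J. \<not> B i))"
        using R KN[OF J] by blast
      have "\<forall>i\<in>N-K J. \<not> A i" unfolding K_def Ob_def by auto
      moreover have "\<forall>i\<in>K J. B i" unfolding K_def Ob_def M_def using AB by auto
      ultimately have "Cp (K J) \<longleftrightarrow> Fp (K J)" using RK by blast
      then show "(\<exists>I\<subseteq>N. Cp I \<and> (\<forall>i\<in>I. if i\<in>J then B i else A i)) \<longleftrightarrow> Fp J"
        using Gam[OF J] FK[OF J] by simp
    qed
  qed
qed

end

lemma bool_le_pf: "(x::'b::boolean_algebra) \<le> y \<longleftrightarrow> (\<forall>U. pfilter U \<and> top \<in> U \<and> bot \<notin> U \<longrightarrow> x \<in> U \<longrightarrow> y \<in> U)"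
proof
  assume "x \<le> y" then show "\<forall>U. pfilter U \<and> top \<in> U \<and> bot \<notin> U \<longrightarrow> x \<in> U \<longrightarrow> y \<in> U" using pf_mono by blast
next
  assume R: "\<forall>U. pfilter U \<and> top \<in> U \<and> bot \<notin> U \<longrightarrow> x \<in> U \<longrightarrow> y \<in> U"
  show "x \<le> y"
  proof (rule ccontr)
    assume "\<not> x \<le> y"
    then obtain U where U: "pfilter U" "x \<in> U" "y \<notin> U" using prime_filter_exists by blast
    have "top \<in> U" using pf_mono[OF U(1,2)] by simp
    moreover have "bot \<notin> U" using pf_mono[OF U(1), of bot y] U(3) by auto
    ultimately show False using R U by blast
  qed
qed

lemma bool_eq_pf: "(x::'b::boolean_algebra) = y \<longleftrightarrow> (\<forall>U. pfilter U \<and> top \<in> U \<and> bot \<notin> U \<longrightarrow> (x \<in> U \<longleftrightarrow> y \<in> U))"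
  by (meson antisym bool_le_pf)

lemma lp_mono: "lat_poly n p \<Longrightarrow> (\<forall>i\<in>{1..n}. x i \<le> y i) \<Longrightarrow> p x \<le> p y"
proof (induction p rule: lat_poly.induct)
  case (proj i) then show ?case by simp
next
  case (const c) then show ?case by simp
next
  case (meet p q) show ?case by (rule inf_mono[OF meet.IH(1)[OF meet.prems] meet.IH(2)[OF meet.prems]])
next
  case (join p q) show ?case by (rule sup_mono[OF join.IH(1)[OF join.prems] join.IH(2)[OF join.prems]])
qed

lemma lp_st1: "lat_poly n p \<Longrightarrow> z \<le> y \<Longrightarrow> p (x(k:=y)) \<sqinter> z \<le> p (x(k:=z))"
proof (induction p rule: lat_poly.induct)
  case (proj i) then show ?case by (auto simp: inf.absorb2)
next
  case (const c) then show ?case by simp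
next
  case (meet p q)
  have c1: "p (x(k:=y)) \<sqinter> q (x(k:=y)) \<sqinter> z \<le> p (x(k:=y)) \<sqinter> z" by (intro inf_mono) simp_all
  have c2: "p (x(k:=y)) \<sqinter> q (x(k:=y)) \<sqinter> z \<le> q (x(k:=y)) \<sqinter> z" by (intro inf_mono) simp_all
  show ?case using order_trans[OF c1 meet.IH(1)[OF meet.prems]] order_trans[OF c2 meet.IH(2)[OF meet.prems]] by (rule le_infI)
next
  case (join p q)
  have "(p (x(k:=y)) \<squnion> q (x(k:=y))) \<sqinter> z = (p (x(k:=y)) \<sqinter> z) \<squnion> (q (x(k:=y)) \<sqinter> z)" by (rule inf_sup_distrib2)
  also have "\<dots> \<le> p (x(k:=z)) \<squnion> q (x(k:=z))" by (rule sup_mono[OF join.IH(1)[OF join.prems] join.IH(2)[OF join.prems]])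
  finally show ?case .
qed

lemma lp_st2: "lat_poly n p \<Longrightarrow> z \<le> y \<Longrightarrow> p (x(k:=y)) \<le> p (x(k:=z)) \<squnion> y"
proof (induction p rule: lat_poly.induct)
  case (proj i) then show ?case by (auto simp: le_supI2)
next
  case (const c) then show ?case by simp
next
  case (meet p q)
  have "p (x(k:=y)) \<sqinter> q (x(k:=y)) \<le> (p (x(k:=z)) \<squnion> y) \<sqinter> (q (x(k:=z)) \<squnion> y)" by (rule inf_mono[OF meet.IH(1)[OF meet.prems] meet.IH(2)[OF meet.prems]])
  also have "\<dots> = (p (x(k:=z)) \<sqinter> q (x(k:=z))) \<squnion> y" by (rule sup_inf_distrib2[symmetric])
  finally show ?case .
next
  case (join p q)
  have c1: "p (x(k:=z)) \<squnion> y \<le> p (x(k:=z)) \<squnion> q (x(k:=z)) \<squnion> y" by (intro sup_mono) simp_all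
  have c2: "q (x(k:=z)) \<squnion> y \<le> p (x(k:=z)) \<squnion> q (x(k:=z)) \<squnion> y" by (intro sup_mono) simp_all
  show ?case using order_trans[OF join.IH(1)[OF join.prems] c1] order_trans[OF join.IH(2)[OF join.prems] c2] by (rule le_supI)
qed

lemma lp_Sup: "finite S \<Longrightarrow> S \<noteq> {} \<Longrightarrow> (\<forall>s\<in>S. lat_poly n (g s)) \<Longrightarrow> lat_poly n (\<lambda>x. Sup_fin ((\<lambda>s. g s x) ` S))"
proof (induction S rule: finite_ne_induct)
  case (singleton s) then show ?case by simp
next
  case (insert s F)
  have IH: "lat_poly n (\<lambda>x. Sup_fin ((\<lambda>s. g s x) ` F))" using insert.IH insert.prems by simp
  have gs: "lat_poly n (\<lambda>x. g s x)" using insert.prems by simp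
  have "lat_poly n (\<lambda>x. g s x \<squnion> Sup_fin ((\<lambda>s. g s x) ` F))"
    using lat_poly.join[OF gs IH] .
  then show ?case using insert by simp
qed

lemma lp_Inf: "finite I \<Longrightarrow> I \<noteq> {} \<Longrightarrow> I \<subseteq> {1..n} \<Longrightarrow> lat_poly n (\<lambda>x::nat\<Rightarrow>'a::distrib_lattice. Inf_fin (x ` I))"
proof (induction I rule: finite_ne_induct)
  case (singleton s) then show ?case by (simp add: lat_poly.proj)
next
  case (insert s F)
  have IH: "lat_poly n (\<lambda>x::nat\<Rightarrow>'a. Inf_fin (x ` F))" using insert.IH insert.prems by simp
  have s: "s \<in> {1..n}" using insert.prems by simp
  have "lat_poly n (\<lambda>x::nat\<Rightarrow>'a. x s \<sqinter> Inf_fin (x ` F))"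
    using lat_poly.meet[OF lat_poly.proj[OF s] IH] .
  then show ?case using insert by simp
qed

lemma lp_p0: "lat_poly n (p0 n a b f)"
proof -
  have all: "\<forall>I\<in>Pow {1..n}. lat_poly n (\<lambda>x. if I = {} then f (ehat a b I) else f (ehat a b I) \<sqinter> Inf_fin (x ` I))"
  proof
    fix I assume I: "I \<in> Pow {1..n}"
    show "lat_poly n (\<lambda>x. if I = {} then f (ehat a b I) else f (ehat a b I) \<sqinter> Inf_fin (x ` I))"
    proof (cases "I = {}")
      case True then show ?thesis by (simp add: lat_poly.const)
    next
      case False
      have "finite I" using I finite_subset by auto
      then have "lat_poly n (\<lambda>x. Inf_fin (x ` I))" using I False by (intro lp_Inf) auto
      then have "lat_poly n (\<lambda>x. f (ehat a b I) \<sqinter> Inf_fin (x ` I))"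
        using lat_poly.meet[OF lat_poly.const] by blast
      then show ?thesis using False by simp
    qed
  qed
  have "lat_poly n (\<lambda>x. Sup_fin ((\<lambda>I. if I = {} then f (ehat a b I) else f (ehat a b I) \<sqinter> Inf_fin (x ` I)) ` Pow {1..n}))"
  proof -
    have fin: "finite (Pow {1..n::nat})" by simp
    have ne: "Pow {1..n::nat} \<noteq> {}" by blast
    show ?thesis using lp_Sup[OF fin ne all] .
  qed
  then show ?thesis unfolding p0_def[abs_def] .
qed

lemma ehat_ins: "ehat a b (I \<union> {k}) = (ehat a b I)(k := b k)"
  unfolding ehat_def by auto
lemma ehat_del: "ehat a b (I - {k}) = (ehat a b I)(k := a k)"
  unfolding ehat_def by auto

lemma ehat_le: fixes a b :: "nat \<Rightarrow> 'a::order" shows "\<forall>i\<in>{1..n}. a i < b i \<Longrightarrow> I \<subseteq> J \<Longrightarrow> \<forall>i\<in>{1..n}. ehat a b I i \<le> ehat a b J i"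
  unfolding ehat_def by (auto simp: less_imp_le)

lemma pf_p0:
  assumes U: "pfilter U" and J: "J \<subseteq> {1..n}"
  shows "p0 n a b f (ehat a b J) \<in> U \<longleftrightarrow>
     (\<exists>I\<subseteq>{1..n}. f (ehat a b I) \<in> U \<and> (\<forall>i\<in>I. if i\<in>J then b i \<in> U else a i \<in> U))"
proof -
  define g where "g I = (if I = {} then f (ehat a b I) else f (ehat a b I) \<sqinter> Inf_fin (ehat a b J ` I))" for I
  have S: "p0 n a b f (ehat a b J) = Sup_fin (g ` Pow {1..n})" unfolding p0_def g_def ..
  have fin: "finite (g ` Pow {1..n::nat})" by simp
  have ne: "g ` Pow {1..n::nat} \<noteq> {}" by blast
  have gI: "g I \<in> U \<longleftrightarrow> f (ehat a b I) \<in> U \<and> (\<forall>i\<in>I. if i\<in>J then b i \<in> U else a i \<in> U)"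
    if I: "I \<in> Pow {1..n}" for I
  proof (cases "I = {}")
    case True then show ?thesis unfolding g_def by simp
  next
    case False
    have fI: "finite I" using I finite_subset by auto
    have "g I \<in> U \<longleftrightarrow> f (ehat a b I) \<in> U \<and> Inf_fin (ehat a b J ` I) \<in> U"
      unfolding g_def using False pf_inf[OF U] by simp
    also have "Inf_fin (ehat a b J ` I) \<in> U \<longleftrightarrow> (\<forall>s\<in>ehat a b J ` I. s \<in> U)"
      using pf_Inf_fin[OF U] fI False by blast
    also have "\<dots> \<longleftrightarrow> (\<forall>i\<in>I. ehat a b J i \<in> U)" by blast
    also have "\<dots> \<longleftrightarrow> (\<forall>i\<in>I. if i\<in>J then b i \<in> U else a i \<in> U)" unfolding ehat_def by simp
    finally show ?thesis .
  qed
  have "p0 n a b f (ehat a b J) \<in> U \<longleftrightarrow> (\<exists>s\<in>g ` Pow {1..n}. s \<in> U)"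
    unfolding S using pf_Sup_fin[OF U fin ne] .
  also have "\<dots> \<longleftrightarrow> (\<exists>I\<in>Pow {1..n}. g I \<in> U)" by blast
  also have "\<dots> \<longleftrightarrow> (\<exists>I\<in>Pow {1..n}. f (ehat a b I) \<in> U \<and> (\<forall>i\<in>I. if i\<in>J then b i \<in> U else a i \<in> U))"
    using gI by (rule bex_cong[OF refl])
  also have "\<dots> \<longleftrightarrow> (\<exists>I\<subseteq>{1..n}. f (ehat a b I) \<in> U \<and> (\<forall>i\<in>I. if i\<in>J then b i \<in> U else a i \<in> U))"
    by blast
  finally show ?thesis .
qed

lemma core_from:
  assumes V: "pfilter V" and ab: "\<forall>i\<in>{1..n}. a i < b i" and mo: "monotone_on_D n a b f" and st: "star_cond n a b f"
  shows "core {1..n} (\<lambda>i. a i \<in> V) (\<lambda>i. b i \<in> V) (\<lambda>I. f (ehat a b I) \<in> V)"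
proof
  show "finite {1..n}" by simp
next
  fix i assume i: "i \<in> {1..n}" "a i \<in> V"
  have "a i \<le> b i" using ab i(1) by (simp add: less_imp_le)
  then show "b i \<in> V" using pf_mono[OF V i(2)] by blast
next
  fix I J assume IJ: "I \<subseteq> J" "J \<subseteq> {1..n}" "f (ehat a b I) \<in> V"
  have "f (ehat a b I) \<le> f (ehat a b J)" using mo IJ(1,2) unfolding monotone_on_D_def by blast
  then show "f (ehat a b J) \<in> V" using pf_mono[OF V IJ(3)] by blast
next
  fix I k assume Ik: "I \<subseteq> {1..n}" "k \<in> {1..n}" "f (ehat a b (I \<union> {k})) \<in> V" "a k \<in> V"
  have "f (ehat a b (I \<union> {k})) \<sqinter> a k \<le> f (ehat a b I)" using st Ik(1,2) unfolding star_cond_def by blast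
  moreover have "f (ehat a b (I \<union> {k})) \<sqinter> a k \<in> V" using Ik(3,4) pf_inf[OF V] by blast
  ultimately show "f (ehat a b I) \<in> V" using pf_mono[OF V] by blast
next
  fix I k assume Ik: "I \<subseteq> {1..n}" "k \<in> {1..n}" "f (ehat a b I) \<in> V" "b k \<notin> V"
  have "f (ehat a b I) \<le> f (ehat a b (I - {k})) \<squnion> b k" using st Ik(1,2) unfolding star_cond_def by blast
  then have "f (ehat a b (I - {k})) \<squnion> b k \<in> V" using pf_mono[OF V Ik(3)] by blast
  then show "f (ehat a b (I - {k})) \<in> V" using Ik(4) pf_sup[OF V] by blast
qed

lemma pf_preimage:
  assumes U: "pfilter U" and hi: "\<forall>x y. h (x \<sqinter> y) = h x \<sqinter> h y" and hs: "\<forall>x y. h (x \<squnion> y) = h x \<squnion> h y"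
  shows "pfilter {x::'a::distrib_lattice. (h x :: 'b::distrib_lattice) \<in> U}"
proof -
  have hm: "h x \<le> h y" if "x \<le> y" for x y
  proof -
    have "h x = h (x \<sqinter> y)" using that by (simp add: inf.absorb1)
    also have "\<dots> = h x \<sqinter> h y" using hi by simp
    finally show ?thesis by (simp add: le_iff_inf)
  qed
  show ?thesis unfolding pfilter_def
  proof (intro conjI allI impI)
    fix x y assume "x \<in> {x. h x \<in> U} \<and> x \<le> y" then show "y \<in> {x. h x \<in> U}" using hm pf_mono[OF U] by blast
  next
    fix x y assume "x \<in> {x. h x \<in> U} \<and> y \<in> {x. h x \<in> U}" then show "x \<sqinter> y \<in> {x. h x \<in> U}" using hi pf_inf[OF U] by simp
  next
    fix x y assume "x \<squnion> y \<in> {x. h x \<in> U}" then show "x \<in> {x. h x \<in> U} \<or> y \<in> {x. h x \<in> U}" using hs pf_sup[OF U] by simp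
  qed
qed

lemma per_U:
  fixes a b :: "nat \<Rightarrow> 'a::distrib_lattice" and h :: "'a \<Rightarrow> 'b::boolean_algebra"
  assumes ab: "\<forall>i\<in>{1..n}. a i < b i" and mo: "monotone_on_D n a b f" and st: "star_cond n a b f"
  and hi: "\<forall>x y. h (x \<sqinter> y) = h x \<sqinter> h y" and hs: "\<forall>x y. h (x \<squnion> y) = h x \<squnion> h y"
  and dnf: "dnf_coeffs n h p c"
  and U: "pfilter U" "top \<in> U" "bot \<notin> U"
  shows "(\<forall>J\<subseteq>{1..n}. h (p (ehat a b J)) \<in> U \<longleftrightarrow> h (f (ehat a b J)) \<in> U) \<longleftrightarrow>
         (\<forall>I\<subseteq>{1..n}. (c_minus n h a b f I \<in> U \<longrightarrow> c I \<in> U) \<and> (c I \<in> U \<longrightarrow> c_plus h a b f I \<in> U))"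
proof -
  define V where "V = {x. h x \<in> U}"
  have V: "pfilter V" unfolding V_def by (rule pf_preimage[OF U(1) hi hs])
  interpret core "{1..n}" "\<lambda>i. a i \<in> V" "\<lambda>i. b i \<in> V" "\<lambda>I. f (ehat a b I) \<in> V"
    by (rule core_from[OF V ab mo st])
  note dd = dnf[unfolded dnf_coeffs_def]
  have cm: "\<forall>I J. I \<subseteq> J \<and> J \<subseteq> {1..n} \<longrightarrow> c I \<le> c J" using dd[THEN conjunct2, THEN conjunct1] .
  have Cmono: "\<And>I J. I \<subseteq> J \<Longrightarrow> J \<subseteq> {1..n} \<Longrightarrow> c I \<in> U \<Longrightarrow> c J \<in> U"
  proof -
    fix I J assume "I \<subseteq> J" "J \<subseteq> {1..n}" "c I \<in> U"
    then show "c J \<in> U" using cm pf_mono[OF U(1)] by blast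
  qed
  have rep0: "\<forall>x. h (p x) = bjoin (Pow {1..n}) (\<lambda>I. c I \<sqinter> bmeet I (\<lambda>i. h (x i)))"
    using dd[THEN conjunct2, THEN conjunct2, THEN conjunct2, THEN conjunct2] .
  have rep: "\<And>x. h (p x) = bjoin (Pow {1..n}) (\<lambda>I. c I \<sqinter> bmeet I (\<lambda>i. h (x i)))" using rep0 by blast
  have E1: "h (p (ehat a b J)) \<in> U \<longleftrightarrow> (\<exists>I\<subseteq>{1..n}. c I \<in> U \<and> (\<forall>i\<in>I. if i\<in>J then b i \<in> V else a i \<in> V))" for J
  proof -
    have "h (p (ehat a b J)) \<in> U \<longleftrightarrow> (\<exists>I\<in>Pow {1..n}. c I \<sqinter> bmeet I (\<lambda>i. h (ehat a b J i)) \<in> U)"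
      unfolding rep using pf_bjoin[OF U(1) U(3) finite_Pow_iff[THEN iffD2, OF finite_atLeastAtMost]] .
    also have "\<dots> \<longleftrightarrow> (\<exists>I\<in>Pow {1..n}. c I \<in> U \<and> (\<forall>i\<in>I. h (ehat a b J i) \<in> U))"
    proof (rule bex_cong[OF refl])
      fix I assume "I \<in> Pow {1..n}" then have fI: "finite I" using finite_subset by auto
      show "c I \<sqinter> bmeet I (\<lambda>i. h (ehat a b J i)) \<in> U \<longleftrightarrow> c I \<in> U \<and> (\<forall>i\<in>I. h (ehat a b J i) \<in> U)"
        using pf_inf[OF U(1)] pf_bmeet[OF U(1) U(2) fI] by simp
    qed
    also have "\<dots> \<longleftrightarrow> (\<exists>I\<subseteq>{1..n}. c I \<in> U \<and> (\<forall>i\<in>I. if i\<in>J then b i \<in> V else a i \<in> V))"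
      unfolding V_def ehat_def by auto
    finally show ?thesis .
  qed
  have E2: "c_minus n h a b f I \<in> U \<longleftrightarrow> f (ehat a b I) \<in> V \<and> (\<forall>i\<in>{1..n}-I. \<not> a i \<in> V)" for I
  proof -
    have fin: "finite ({1..n::nat} - I)" by simp
    show ?thesis
      unfolding c_minus_def V_def using pf_inf[OF U(1)] pf_bmeet[OF U(1) U(2) fin] pf_compl[OF U] by simp
  qed
  have E3: "c_plus h a b f I \<in> U \<longleftrightarrow> f (ehat a b I) \<in> V \<or> (\<exists>i\<in>I. \<not> b i \<in> V)" if "I \<subseteq> {1..n}" for I
  proof -
    have fI: "finite I" using that finite_subset by auto
    show ?thesis
      unfolding c_plus_def V_def using pf_sup[OF U(1)] pf_bjoin[OF U(1) U(3) fI] pf_compl[OF U] by simp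
  qed
  have "(\<forall>J\<subseteq>{1..n}. h (p (ehat a b J)) \<in> U \<longleftrightarrow> h (f (ehat a b J)) \<in> U) \<longleftrightarrow>
        (\<forall>J\<subseteq>{1..n}. (\<exists>I\<subseteq>{1..n}. c I \<in> U \<and> (\<forall>i\<in>I. if i\<in>J then b i \<in> V else a i \<in> V)) \<longleftrightarrow> f (ehat a b J) \<in> V)"
    unfolding E1 by (simp add: V_def)
  also have "\<dots> \<longleftrightarrow> (\<forall>I\<subseteq>{1..n}. (f (ehat a b I) \<in> V \<and> (\<forall>i\<in>{1..n}-I. \<not> a i \<in> V) \<longrightarrow> c I \<in> U) \<and> (c I \<in> U \<longrightarrow> f (ehat a b I) \<in> V \<or> (\<exists>i\<in>I. \<not> b i \<in> V)))"
    by (rule dnf_core[where Cp = "\<lambda>I. c I \<in> U", OF Cmono])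
  also have "\<dots> \<longleftrightarrow> (\<forall>I\<subseteq>{1..n}. (c_minus n h a b f I \<in> U \<longrightarrow> c I \<in> U) \<and> (c I \<in> U \<longrightarrow> c_plus h a b f I \<in> U))"
    using E2 E3 by auto
  finally show ?thesis .
qed

lemma swapQ: "(\<forall>I. P I \<longrightarrow> (\<forall>U. Q U \<longrightarrow> R I U)) \<longleftrightarrow> (\<forall>U. Q U \<longrightarrow> (\<forall>I. P I \<longrightarrow> R I U))"
  by blast
lemma congQ: "\<forall>U. Q U \<longrightarrow> (A U \<longleftrightarrow> B U) \<Longrightarrow> (\<forall>U. Q U \<longrightarrow> A U) \<longleftrightarrow> (\<forall>U. Q U \<longrightarrow> B U)"
  by blast
lemma swapQ2: "(\<forall>U. Q U \<longrightarrow> (\<forall>I. P I \<longrightarrow> (X I U \<longrightarrow> Y I U) \<and> (Y I U \<longrightarrow> Z I U))) \<longleftrightarrow>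
   (\<forall>I. P I \<longrightarrow> (\<forall>U. Q U \<longrightarrow> X I U \<longrightarrow> Y I U) \<and> (\<forall>U. Q U \<longrightarrow> Y I U \<longrightarrow> Z I U))"
  by blast

theorem theorem3p6:
  fixes n :: nat and a b :: "nat \<Rightarrow> 'a::distrib_lattice" and f :: "(nat \<Rightarrow> 'a) \<Rightarrow> 'a"
  assumes "n \<ge> 1" and "\<forall>i\<in>{1..n}. a i < b i"
  shows "((\<exists>p. lat_poly n p \<and> (\<forall>I. I \<subseteq> {1..n} \<longrightarrow> p (ehat a b I) = f (ehat a b I)))
           \<longleftrightarrow> monotone_on_D n a b f \<and> star_cond n a b f)
       \<and> (monotone_on_D n a b f \<and> star_cond n a b f \<longrightarrow>
         (\<forall>h. bool_envelope (h :: 'a \<Rightarrow> 'b::boolean_algebra) \<longrightarrow>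
           (\<forall>p c. lat_poly n p \<and> dnf_coeffs n h p c \<longrightarrow>
              ((\<forall>I. I \<subseteq> {1..n} \<longrightarrow> p (ehat a b I) = f (ehat a b I)) \<longleftrightarrow>
               (\<forall>I. I \<subseteq> {1..n} \<longrightarrow> c_minus n h a b f I \<le> c I \<and> c I \<le> c_plus h a b f I)))))
       \<and> (monotone_on_D n a b f \<and> star_cond n a b f \<longrightarrow>
         lat_poly n (p0 n a b f) \<and>
         (\<forall>I. I \<subseteq> {1..n} \<longrightarrow> p0 n a b f (ehat a b I) = f (ehat a b I)))"
proof -
  have ab: "\<forall>i\<in>{1..n}. a i < b i" by fact
  have nec: "monotone_on_D n a b f \<and> star_cond n a b f"
    if p: "lat_poly n p" and pf: "\<forall>I. I \<subseteq> {1..n} \<longrightarrow> p (ehat a b I) = f (ehat a b I)" for p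
  proof
    show "monotone_on_D n a b f" unfolding monotone_on_D_def
    proof (intro allI impI)
      fix I J assume IJ: "I \<subseteq> J \<and> J \<subseteq> {1..n}"
      have "p (ehat a b I) \<le> p (ehat a b J)" using lp_mono[OF p ehat_le[OF ab]] IJ by blast
      then show "f (ehat a b I) \<le> f (ehat a b J)" using pf IJ by auto
    qed
    show "star_cond n a b f" unfolding star_cond_def
    proof (intro allI impI)
      fix I k assume Ik: "I \<subseteq> {1..n} \<and> k \<in> {1..n}"
      have akb: "a k \<le> b k" using ab Ik by (simp add: less_imp_le)
      have s1: "p (ehat a b (I \<union> {k})) \<sqinter> a k \<le> p (ehat a b (I - {k}))"
        unfolding ehat_ins ehat_del by (rule lp_st1[OF p akb])
      have s2: "p (ehat a b (I \<union> {k})) \<le> p (ehat a b (I - {k})) \<squnion> b k"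
        unfolding ehat_ins ehat_del by (rule lp_st2[OF p akb])
      have m1: "p (ehat a b (I - {k})) \<le> p (ehat a b I)" using lp_mono[OF p ehat_le[OF ab]] by blast
      have m2: "p (ehat a b I) \<le> p (ehat a b (I \<union> {k}))" using lp_mono[OF p ehat_le[OF ab]] by blast
      have sub: "I \<union> {k} \<subseteq> {1..n}" "I - {k} \<subseteq> {1..n}" using Ik by auto
      have e: "p (ehat a b (I \<union> {k})) = f (ehat a b (I \<union> {k}))" "p (ehat a b (I - {k})) = f (ehat a b (I - {k}))"
        "p (ehat a b I) = f (ehat a b I)" using pf sub Ik by auto
      show "f (ehat a b (I \<union> {k})) \<sqinter> a k \<le> f (ehat a b I) \<and> f (ehat a b I) \<le> f (ehat a b (I - {k})) \<squnion> b k"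
        using order_trans[OF s1 m1] order_trans[OF m2 s2] unfolding e by simp
    qed
  qed
  have suff: "lat_poly n (p0 n a b f) \<and> (\<forall>I. I \<subseteq> {1..n} \<longrightarrow> p0 n a b f (ehat a b I) = f (ehat a b I))"
    if ms: "monotone_on_D n a b f \<and> star_cond n a b f"
  proof (intro conjI allI impI)
    show "lat_poly n (p0 n a b f)" by (rule lp_p0)
  next
    fix J assume J: "J \<subseteq> {1..n}"
    show "p0 n a b f (ehat a b J) = f (ehat a b J)"
    proof (rule eq_via_pf[THEN iffD2], intro allI impI)
      fix U :: "'a set" assume U: "pfilter U"
      interpret core "{1..n}" "\<lambda>i. a i \<in> U" "\<lambda>i. b i \<in> U" "\<lambda>I. f (ehat a b I) \<in> U"
        using core_from[OF U ab] ms by blast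
      show "p0 n a b f (ehat a b J) \<in> U \<longleftrightarrow> f (ehat a b J) \<in> U"
        using pf_p0[OF U J] eval_core[OF J] by simp
    qed
  qed
  have part2: "\<forall>h. bool_envelope (h :: 'a \<Rightarrow> 'b::boolean_algebra) \<longrightarrow>
           (\<forall>p c. lat_poly n p \<and> dnf_coeffs n h p c \<longrightarrow>
              ((\<forall>I. I \<subseteq> {1..n} \<longrightarrow> p (ehat a b I) = f (ehat a b I)) \<longleftrightarrow>
               (\<forall>I. I \<subseteq> {1..n} \<longrightarrow> c_minus n h a b f I \<le> c I \<and> c I \<le> c_plus h a b f I)))"
    if ms: "monotone_on_D n a b f \<and> star_cond n a b f"
  proof (intro allI impI, elim conjE)
    fix h :: "'a \<Rightarrow> 'b" and p c assume env: "bool_envelope h" and dnf: "dnf_coeffs n h p c"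
    have inj: "inj h" and hi: "\<forall>x y. h (x \<sqinter> y) = h x \<sqinter> h y" and hs: "\<forall>x y. h (x \<squnion> y) = h x \<squnion> h y"
      using env unfolding bool_envelope_def by blast+
    let ?Q = "\<lambda>U::'b set. pfilter U \<and> top \<in> U \<and> bot \<notin> U"
    have perU: "\<forall>U. ?Q U \<longrightarrow> ((\<forall>J\<subseteq>{1..n}. h (p (ehat a b J)) \<in> U \<longleftrightarrow> h (f (ehat a b J)) \<in> U) \<longleftrightarrow>
         (\<forall>I\<subseteq>{1..n}. (c_minus n h a b f I \<in> U \<longrightarrow> c I \<in> U) \<and> (c I \<in> U \<longrightarrow> c_plus h a b f I \<in> U)))"
    proof (intro allI impI)
      fix U assume "?Q U"
      then show "(\<forall>J\<subseteq>{1..n}. h (p (ehat a b J)) \<in> U \<longleftrightarrow> h (f (ehat a b J)) \<in> U) \<longleftrightarrow>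
         (\<forall>I\<subseteq>{1..n}. (c_minus n h a b f I \<in> U \<longrightarrow> c I \<in> U) \<and> (c I \<in> U \<longrightarrow> c_plus h a b f I \<in> U))"
        using per_U[OF ab _ _ hi hs dnf] ms by blast
    qed
    have "(\<forall>I. I \<subseteq> {1..n} \<longrightarrow> p (ehat a b I) = f (ehat a b I)) \<longleftrightarrow>
          (\<forall>I. I \<subseteq> {1..n} \<longrightarrow> h (p (ehat a b I)) = h (f (ehat a b I)))"
      using inj by (auto dest: injD)
    also have "\<dots> \<longleftrightarrow> (\<forall>I. I \<subseteq> {1..n} \<longrightarrow> (\<forall>U. ?Q U \<longrightarrow> (h (p (ehat a b I)) \<in> U \<longleftrightarrow> h (f (ehat a b I)) \<in> U)))"
    proof -
      have e: "\<And>I. (h (p (ehat a b I)) = h (f (ehat a b I))) \<longleftrightarrow> (\<forall>U. ?Q U \<longrightarrow> (h (p (ehat a b I)) \<in> U \<longleftrightarrow> h (f (ehat a b I)) \<in> U))"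
        by (rule bool_eq_pf)
      show ?thesis by (simp only: e)
    qed
    also have "\<dots> \<longleftrightarrow> (\<forall>U. ?Q U \<longrightarrow> (\<forall>J\<subseteq>{1..n}. h (p (ehat a b J)) \<in> U \<longleftrightarrow> h (f (ehat a b J)) \<in> U))"
      by (rule swapQ)
    also have "\<dots> \<longleftrightarrow> (\<forall>U. ?Q U \<longrightarrow> (\<forall>I\<subseteq>{1..n}. (c_minus n h a b f I \<in> U \<longrightarrow> c I \<in> U) \<and> (c I \<in> U \<longrightarrow> c_plus h a b f I \<in> U)))"
      by (rule congQ[OF perU])
    also have "\<dots> \<longleftrightarrow> (\<forall>I. I \<subseteq> {1..n} \<longrightarrow> (\<forall>U. ?Q U \<longrightarrow> c_minus n h a b f I \<in> U \<longrightarrow> c I \<in> U) \<and> (\<forall>U. ?Q U \<longrightarrow> c I \<in> U \<longrightarrow> c_plus h a b f I \<in> U))"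
      by (rule swapQ2)
    also have "\<dots> \<longleftrightarrow> (\<forall>I. I \<subseteq> {1..n} \<longrightarrow> c_minus n h a b f I \<le> c I \<and> c I \<le> c_plus h a b f I)"
    proof -
      have e1: "\<And>I. (c_minus n h a b f I \<le> c I) \<longleftrightarrow> (\<forall>U. ?Q U \<longrightarrow> c_minus n h a b f I \<in> U \<longrightarrow> c I \<in> U)"
        by (rule bool_le_pf)
      have e2: "\<And>I. (c I \<le> c_plus h a b f I) \<longleftrightarrow> (\<forall>U. ?Q U \<longrightarrow> c I \<in> U \<longrightarrow> c_plus h a b f I \<in> U)"
        by (rule bool_le_pf)
      show ?thesis by (simp only: e1 e2)
    qed
    finally show "(\<forall>I. I \<subseteq> {1..n} \<longrightarrow> p (ehat a b I) = f (ehat a b I)) \<longleftrightarrow>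
               (\<forall>I. I \<subseteq> {1..n} \<longrightarrow> c_minus n h a b f I \<le> c I \<and> c I \<le> c_plus h a b f I)" .
  qed
  have part1: "(\<exists>p. lat_poly n p \<and> (\<forall>I. I \<subseteq> {1..n} \<longrightarrow> p (ehat a b I) = f (ehat a b I)))
           \<longleftrightarrow> monotone_on_D n a b f \<and> star_cond n a b f"
    using nec suff by blast
  show ?thesis using part1 part2 suff by blast
qed

end
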